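(* Let $\Sigma=(\mathbb{N}_0,X,U,\mathscr{U},\phi)$ be a control system as in the standing setup and let $Q\subset X$ be a control set with $\operatorname{cl}\operatorname{Int}(Q)=\operatorname{cl}Q$. Then $Q$ is either equi-invariant in the mean or unstable in the mean.
   Context: Standing setup: $(X,d)$ is a metric space, $U$ is a compact metric space, and $F:X\times U\to X$ is a map such that $F_u:=F(\cdot,u)$ is continuous for every $u\in U$. Let $\mathscr U=U^{\mathbb N_0}$ with the product topology. For $\omega=(\omega_0,\omega_1,\dots)\in\mathscr U$, $x\in X$, set $\phi(0,x,\omega)=x$ and $\phi(k,x,\omega)=F_{\omega_{k-1}}\circ\cdots\circ F_{\omega_0}(x)$ for $k\ge1$. It is assumed that $\phi:\mathbb N_0\times X\times\mathscr U\to X$ is continuous. Notation: $\mathbb N=\{1,2,\dots\}$; $B(x,\delta)$ is the open ball; $d(y,Q)=\inf_{q\in Q}d(y,q)$; $\operatorname{Int}$ and $\operatorname{cl}$ denote interior and closure in $X$. Control set: $D\subset X$ is a control set if (i) for every $x\in D$ there is $\omega\in\mathscr U$ with $\phi(k,x,\omega)\in D$ for all $k\in\mathbb N_0$; (ii) for every $x\in D$, $D\subset\operatorname{cl}\mathcal O^+(x)$, where $\mathcal O^+(x)=\{\phi(m,x,\omega):m\in\mathbb N_0,\omega\in\mathscr U\}$; (iii) $D$ is maximal with (i) and (ii). $x\in Q$ is an equi-invariant point in the mean of $Q$ if for every $\varepsilon>0$ there exist $\delta>0$ and $\omega\in\mathscr U$ such that $\frac1n\sum_{i=0}^{n-1}d(\phi(i,y,\omega),Q)<\varepsilon$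 for all $n\in\mathbb N$ and all $y\in B(x,\delta)\cap Q$; $Q$ is equi-invariant in the mean if every point of $Q$ is such a point. $Q$ is unstable in the mean if there exists $\varepsilon>0$ such that for every $x\in Q$, every $\delta>0$ and every $\omega\in\mathscr U$ there exist $y\in B(x,\delta)\cap Q$ and $m\in\mathbb N$ with $\frac1m\sum_{i=0}^{m-1}d(\phi(i,y,\omega),Q)\ge\varepsilon$. *)

theory Defs
  imports "HOL-Analysis.Analysis"
begin

text \<open>Trajectories of the discrete-time control system x_{k+1} = F(x_k, omega_k).
  The state space X is the whole type 'a; the control range U is a set of 'b.\<close>

primrec phi :: "('a \<Rightarrow> 'b \<Rightarrow> 'a) \<Rightarrow> nat \<Rightarrow> 'a \<Rightarrow> (nat \<Rightarrow> 'b) \<Rightarrow> 'a" where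
  "phi F 0 x \<omega> = x"
| "phi F (Suc k) x \<omega> = F (phi F k x \<omega>) (\<omega> k)"

definition ctrls :: "'b set \<Rightarrow> (nat \<Rightarrow> 'b) set" where
  "ctrls U = {\<omega>. \<forall>i. \<omega> i \<in> U}"

definition pos_orbit :: "('a \<Rightarrow> 'b \<Rightarrow> 'a) \<Rightarrow> 'b set \<Rightarrow> 'a \<Rightarrow> 'a set" where
  "pos_orbit F U x = {phi F m x \<omega> | m \<omega>. \<omega> \<in> ctrls U}"

definition ctrl_set_props :: "('a::topological_space \<Rightarrow> 'b \<Rightarrow> 'a) \<Rightarrow> 'b set \<Rightarrow> 'a set \<Rightarrow> bool" where
  "ctrl_set_props F U D \<longleftrightarrow>
     (\<forall>x\<in>D. \<exists>\<omega>\<in>ctrls U. \<forall>k. phi F k x \<omega> \<in> D) \<and>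
     (\<forall>x\<in>D. D \<subseteq> closure (pos_orbit F U x))"

definition control_set :: "('a::topological_space \<Rightarrow> 'b \<Rightarrow> 'a) \<Rightarrow> 'b set \<Rightarrow> 'a set \<Rightarrow> bool" where
  "control_set F U D \<longleftrightarrow> ctrl_set_props F U D \<and>
     (\<forall>D'. ctrl_set_props F U D' \<and> D \<subseteq> D' \<longrightarrow> D' = D)"

definition equi_inv_mean_point ::
  "('a::metric_space \<Rightarrow> 'b \<Rightarrow> 'a) \<Rightarrow> 'b set \<Rightarrow> 'a set \<Rightarrow> 'a \<Rightarrow> bool" where
  "equi_inv_mean_point F U Q x \<longleftrightarrow> x \<in> Q \<and>
     (\<forall>\<epsilon>>0. \<exists>\<delta>>0. \<exists>\<omega>\<in>ctrls U. \<forall>n::nat. \<forall>y \<in> ball x \<delta> \<inter> Q. n \<ge> 1 \<longrightarrow>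
        (1 / real n) * (\<Sum>i<n. infdist (phi F i y \<omega>) Q) < \<epsilon>)"

definition equi_inv_mean :: "('a::metric_space \<Rightarrow> 'b \<Rightarrow> 'a) \<Rightarrow> 'b set \<Rightarrow> 'a set \<Rightarrow> bool" where
  "equi_inv_mean F U Q \<longleftrightarrow> (\<forall>x\<in>Q. equi_inv_mean_point F U Q x)"

definition unstable_mean :: "('a::metric_space \<Rightarrow> 'b \<Rightarrow> 'a) \<Rightarrow> 'b set \<Rightarrow> 'a set \<Rightarrow> bool" where
  "unstable_mean F U Q \<longleftrightarrow> (\<exists>\<epsilon>>0. \<forall>x\<in>Q. \<forall>\<delta>>0. \<forall>\<omega>\<in>ctrls U.
     \<exists>y \<in> ball x \<delta> \<inter> Q. \<exists>m::nat. m \<ge> 1 \<and>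
        (1 / real m) * (\<Sum>i<m. infdist (phi F i y \<omega>) Q) \<ge> \<epsilon>)"

end

theory Submission
  imports Defs
begin

lemma phi_shift: "phi F (m + j) y \<omega> = phi F j (phi F m y \<omega>) (\<lambda>t. \<omega> (m + t))"
  by (induction j) auto

lemma phi_agree: "(\<And>t. t < k \<Longrightarrow> \<omega> t = \<omega>' t) \<Longrightarrow> phi F k y \<omega> = phi F k y \<omega>'"
  by (induction k) auto

lemma phi_cont:
  assumes "\<And>u. u \<in> U \<Longrightarrow> continuous_on UNIV (\<lambda>x. F x u)" and "\<omega> \<in> ctrls U"
  shows "continuous_on UNIV (\<lambda>x. phi F k x \<omega>)"
proof (induction k)
  case 0 then show ?case by (simp add: continuous_on_id)
next
  case (Suc k)
  have "\<omega> k \<in> U" using assms(2) by (simp add: ctrls_def)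
  then have c: "continuous_on UNIV (\<lambda>x. F x (\<omega> k))" using assms(1) by blast
  have "continuous_on UNIV ((\<lambda>x. F x (\<omega> k)) \<circ> (\<lambda>x. phi F k x \<omega>))"
    by (rule continuous_on_compose[OF Suc continuous_on_subset[OF c subset_UNIV]])
  then show ?case by (simp add: o_def)
qed

definition concat_ctrl :: "nat \<Rightarrow> (nat \<Rightarrow> 'b) \<Rightarrow> (nat \<Rightarrow> 'b) \<Rightarrow> nat \<Rightarrow> 'b" where
  "concat_ctrl m \<omega> \<omega>' = (\<lambda>t. if t < m then \<omega> t else \<omega>' (t - m))"

lemma concat_ctrls: "\<omega> \<in> ctrls U \<Longrightarrow> \<omega>' \<in> ctrls U \<Longrightarrow> concat_ctrl m \<omega> \<omega>' \<in> ctrls U"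
  by (simp add: ctrls_def concat_ctrl_def)

lemma concat_phi1: "i \<le> m \<Longrightarrow> phi F i y (concat_ctrl m \<omega> \<omega>') = phi F i y \<omega>"
  by (rule phi_agree) (simp add: concat_ctrl_def)

lemma concat_phi2: "phi F (m + j) y (concat_ctrl m \<omega> \<omega>') = phi F j (phi F m y \<omega>) \<omega>'"
proof -
  have "phi F (m + j) y (concat_ctrl m \<omega> \<omega>') =
     phi F j (phi F m y (concat_ctrl m \<omega> \<omega>')) (\<lambda>t. concat_ctrl m \<omega> \<omega>' (m + t))"
    by (rule phi_shift)
  also have "(\<lambda>t. concat_ctrl m \<omega> \<omega>' (m + t)) = \<omega>'" by (simp add: concat_ctrl_def)
  finally show ?thesis using concat_phi1[of m m F y \<omega> \<omega>'] by simp
qed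

lemma orbit_trans:
  assumes "a \<in> pos_orbit F U b" shows "pos_orbit F U a \<subseteq> pos_orbit F U b"
proof
  fix c assume "c \<in> pos_orbit F U a"
  then obtain k \<omega>' where c: "c = phi F k a \<omega>'" "\<omega>' \<in> ctrls U" by (auto simp: pos_orbit_def)
  obtain m \<omega> where a: "a = phi F m b \<omega>" "\<omega> \<in> ctrls U" using assms by (auto simp: pos_orbit_def)
  have "c = phi F (m + k) b (concat_ctrl m \<omega> \<omega>')" unfolding c(1) a(1) by (rule concat_phi2[symmetric])
  then show "c \<in> pos_orbit F U b" using concat_ctrls[OF a(2) c(2)] unfolding pos_orbit_def by blast
qed

lemma orbit_memI: "\<omega> \<in> ctrls U \<Longrightarrow> phi F k x \<omega> \<in> pos_orbit F U x"
  unfolding pos_orbit_def by blast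

lemma self_in_orbit: "U \<noteq> {} \<Longrightarrow> a \<in> pos_orbit F U a"
proof -
  assume "U \<noteq> {}" then obtain u where "u \<in> U" by blast
  then have "(\<lambda>_. u) \<in> ctrls U" by (simp add: ctrls_def)
  moreover have "a = phi F 0 a (\<lambda>_. u)" by simp
  ultimately show ?thesis unfolding pos_orbit_def by blast
qed

lemma closure_orbit_mono:
  assumes F: "\<And>u. u \<in> U \<Longrightarrow> continuous_on UNIV (\<lambda>x. F x u)"
    and a: "a \<in> closure (pos_orbit F U b)"
  shows "closure (pos_orbit F U a) \<subseteq> closure (pos_orbit F U b)"
proof (rule closure_minimal[OF _ closed_closure])
  show "pos_orbit F U a \<subseteq> closure (pos_orbit F U b)"
  proof
    fix c assume "c \<in> pos_orbit F U a"
    then obtain k \<omega>' where c: "c = phi F k a \<omega>'" "\<omega>' \<in> ctrls U" by (auto simp: pos_orbit_def)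
    let ?f = "\<lambda>x. phi F k x \<omega>'"
    have cont: "continuous_on (closure (pos_orbit F U b)) ?f"
      by (rule continuous_on_subset[OF phi_cont[OF F c(2)] subset_UNIV])
    have "?f ` pos_orbit F U b \<subseteq> closure (pos_orbit F U b)"
    proof
      fix d assume "d \<in> ?f ` pos_orbit F U b"
      then obtain e where e: "e \<in> pos_orbit F U b" "d = ?f e" by blast
      have "d \<in> pos_orbit F U e" using e(2) c(2) unfolding pos_orbit_def by blast
      then show "d \<in> closure (pos_orbit F U b)" using orbit_trans[OF e(1)] closure_subset by blast
    qed
    then have "?f ` closure (pos_orbit F U b) \<subseteq> closure (pos_orbit F U b)"
      using image_closure_subset[OF cont closed_closure] by blast
    then show "c \<in> closure (pos_orbit F U b)" using a c(1) by blast
  qed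
qed


lemma intermediate_in_Q:
  assumes F: "\<And>u. u \<in> U \<Longrightarrow> continuous_on UNIV (\<lambda>x. F x u)"
    and cs: "control_set F U Q" and z: "z \<in> Q" and om: "\<omega> \<in> ctrls U"
    and qQ: "phi F m z \<omega> \<in> Q" and im: "i \<le> m"
  shows "phi F i z \<omega> \<in> Q"
proof -
  define D where "D = Q \<union> {phi F j z \<omega> | j. j \<le> m}"
  have Qp: "ctrl_set_props F U Q" using cs by (simp add: control_set_def)
  have Qp1: "\<forall>x\<in>Q. \<exists>\<omega>\<in>ctrls U. \<forall>k. phi F k x \<omega> \<in> Q" using Qp by (simp add: ctrl_set_props_def)
  have Qp2: "\<forall>x\<in>Q. Q \<subseteq> closure (pos_orbit F U x)" using Qp by (simp add: ctrl_set_props_def)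
  have "\<omega> 0 \<in> U" using om by (simp add: ctrls_def)
  then have Une: "U \<noteq> {}" by blast
  have sh: "(\<lambda>t. \<omega> (j + t)) \<in> ctrls U" for j using om by (simp add: ctrls_def)
  have Dcases: "v \<in> Q \<or> (\<exists>j. v = phi F j z \<omega> \<and> j \<le> m)" if "v \<in> D" for v
    using that unfolding D_def by blast
  have shq: "phi F m z \<omega> = phi F (m - j) (phi F j z \<omega>) (\<lambda>t. \<omega> (j + t))" if "j \<le> m" for j
  proof -
    have "phi F m z \<omega> = phi F (j + (m - j)) z \<omega>" using that by simp
    also have "\<dots> = phi F (m - j) (phi F j z \<omega>) (\<lambda>t. \<omega> (j + t))" by (rule phi_shift)
    finally show ?thesis .
  qed
  have orbQ: "\<exists>q\<in>Q. q \<in> pos_orbit F U v" if "v \<in> D" for v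
  proof (cases "v \<in> Q")
    case True
    show ?thesis
    proof (rule bexI[where x=v])
      show "v \<in> pos_orbit F U v" by (rule self_in_orbit[OF Une])
      show "v \<in> Q" by (rule True)
    qed
  next
    case False
    have "\<exists>j. v = phi F j z \<omega> \<and> j \<le> m" using Dcases[OF that] False by iprover
    then obtain j where j: "v = phi F j z \<omega>" "j \<le> m" by iprover
    have eq: "phi F m z \<omega> = phi F (m - j) v (\<lambda>t. \<omega> (j + t))" unfolding j(1) by (rule shq[OF j(2)])
    have "phi F m z \<omega> \<in> pos_orbit F U v" unfolding eq by (rule orbit_memI[OF sh])
    show ?thesis
    proof (rule bexI[where x="phi F m z \<omega>"])
      show "phi F m z \<omega> \<in> pos_orbit F U v" by fact
      show "phi F m z \<omega> \<in> Q" by (rule qQ)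
    qed
  qed
  have props: "ctrl_set_props F U D"
    unfolding ctrl_set_props_def
  proof (intro conjI ballI)
    fix v assume v: "v \<in> D"
    show "\<exists>\<omega>\<in>ctrls U. \<forall>k. phi F k v \<omega> \<in> D"
    proof (cases "v \<in> Q")
      case True
      then obtain \<omega>v where "\<omega>v \<in> ctrls U" "\<forall>k. phi F k v \<omega>v \<in> Q" using Qp1 by blast
      then show ?thesis unfolding D_def by blast
    next
      case False
      then obtain j where j: "v = phi F j z \<omega>" "j \<le> m" using Dcases[OF v] by blast
      obtain \<omega>q where \<omega>q: "\<omega>q \<in> ctrls U" "\<forall>k. phi F k (phi F m z \<omega>) \<omega>q \<in> Q"
        using Qp1 qQ by blast
      define \<omega>' where "\<omega>' = concat_ctrl (m - j) (\<lambda>t. \<omega> (j + t)) \<omega>q"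
      have "\<omega>' \<in> ctrls U" unfolding \<omega>'_def by (rule concat_ctrls[OF sh \<omega>q(1)])
      moreover have "phi F k v \<omega>' \<in> D" for k
      proof (cases "k \<le> m - j")
        case True
        then have "phi F k v \<omega>' = phi F k v (\<lambda>t. \<omega> (j + t))"
          unfolding \<omega>'_def by (rule concat_phi1)
        also have "\<dots> = phi F (j + k) z \<omega>" unfolding j(1) by (rule phi_shift[symmetric])
        finally have eq: "phi F k v \<omega>' = phi F (j + k) z \<omega>" .
        have "j + k \<le> m" using True j(2) by simp
        then have "phi F (j + k) z \<omega> \<in> D" unfolding D_def by blast
        then show ?thesis unfolding eq .
      next
        case False
        define k' where "k' = k - (m - j)"
        have k': "k = (m - j) + k'" using False unfolding k'_def by simp
        have "phi F k v \<omega>' = phi F k' (phi F (m - j) v (\<lambda>t. \<omega> (j + t))) \<omega>q"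
          unfolding \<omega>'_def k' by (rule concat_phi2)
        also have "phi F (m - j) v (\<lambda>t. \<omega> (j + t)) = phi F m z \<omega>"
          unfolding j(1) by (rule shq[OF j(2), symmetric])
        finally have eq: "phi F k v \<omega>' = phi F k' (phi F m z \<omega>) \<omega>q" .
        have "phi F k' (phi F m z \<omega>) \<omega>q \<in> D" using \<omega>q(2) unfolding D_def by blast
        then show ?thesis unfolding eq .
      qed
      ultimately show ?thesis by blast
    qed
  next
    fix v assume v: "v \<in> D"
    obtain q where q: "q \<in> Q" "q \<in> pos_orbit F U v" using orbQ[OF v] by blast
    have qc: "q \<in> closure (pos_orbit F U v)" using q(2) closure_subset by blast
    have c1: "closure (pos_orbit F U q) \<subseteq> closure (pos_orbit F U v)"
      by (rule closure_orbit_mono[OF F qc])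
    have QQ: "Q \<subseteq> closure (pos_orbit F U q)" using Qp2 q(1) by blast
    have zc: "z \<in> closure (pos_orbit F U v)" using QQ c1 z by blast
    have c2: "closure (pos_orbit F U z) \<subseteq> closure (pos_orbit F U v)"
      by (rule closure_orbit_mono[OF F zc])
    have "phi F j z \<omega> \<in> closure (pos_orbit F U v)" for j
    proof -
      have "phi F j z \<omega> \<in> pos_orbit F U z" by (rule orbit_memI[OF om])
      then show ?thesis using c2 closure_subset by blast
    qed
    then have "{phi F j z \<omega> | j. j \<le> m} \<subseteq> closure (pos_orbit F U v)" by blast
    moreover have "Q \<subseteq> closure (pos_orbit F U v)" using QQ c1 by blast
    ultimately show "D \<subseteq> closure (pos_orbit F U v)" unfolding D_def by blast
  qed
  have "Q \<subseteq> D" by (simp add: D_def)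
  then have DQ: "D = Q" using cs props unfolding control_set_def by blast
  have "phi F i z \<omega> \<in> D" using im unfolding D_def by blast
  then show ?thesis unfolding DQ .
qed

lemma sum_split_nat: "(\<Sum>i<m + (k::nat). f i) = (\<Sum>i<m. f i) + (\<Sum>j<k. f (m + j))"
  by (induction k) (auto simp: add.assoc)

theorem mainTheorem8:
  fixes F :: "'a::metric_space \<Rightarrow> 'b::metric_space \<Rightarrow> 'a"
    and U :: "'b set" and Q :: "'a set"
  assumes "compact U"
    and "\<And>u. u \<in> U \<Longrightarrow> continuous_on UNIV (\<lambda>x. F x u)"
    and "continuous_on (UNIV \<times> UNIV \<times> ctrls U) (\<lambda>(k, x, \<omega>). phi F k x \<omega>)"
    and "control_set F U Q"
    and "closure (interior Q) = closure Q"
  shows "equi_inv_mean F U Q \<or> unstable_mean F U Q"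
proof (rule disjCI)
  note F = assms(2)
  have Qp: "ctrl_set_props F U Q" using assms(4) by (simp add: control_set_def)
  have Qp2: "\<forall>x\<in>Q. Q \<subseteq> closure (pos_orbit F U x)" using Qp by (simp add: ctrl_set_props_def)
  assume nu: "\<not> unstable_mean F U Q"
  have H: "\<exists>x\<in>Q. \<exists>\<delta>>0. \<exists>\<omega>\<in>ctrls U. \<forall>y\<in>ball x \<delta> \<inter> Q. \<forall>m::nat. m \<ge> 1 \<longrightarrow>
        (1 / real m) * (\<Sum>i<m. infdist (phi F i y \<omega>) Q) < e" if "e > 0" for e
  proof (rule ccontr)
    assume nt: "\<not> ?thesis"
    have "\<forall>x\<in>Q. \<forall>\<delta>>0. \<forall>\<omega>\<in>ctrls U. \<exists>y\<in>ball x \<delta> \<inter> Q. \<exists>m::nat. m \<ge> 1 \<and>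
        e \<le> (1 / real m) * (\<Sum>i<m. infdist (phi F i y \<omega>) Q)"
    proof (intro ballI allI impI)
      fix x and \<delta> :: real and \<omega> assume a: "x \<in> Q" "\<delta> > 0" "\<omega> \<in> ctrls U"
      have "\<not> (\<forall>y\<in>ball x \<delta> \<inter> Q. \<forall>m::nat. m \<ge> 1 \<longrightarrow>
        (1 / real m) * (\<Sum>i<m. infdist (phi F i y \<omega>) Q) < e)"
        using nt a by blast
      then show "\<exists>y\<in>ball x \<delta> \<inter> Q. \<exists>m::nat. m \<ge> 1 \<and>
        e \<le> (1 / real m) * (\<Sum>i<m. infdist (phi F i y \<omega>) Q)"
        by (simp only: ball_simps not_all not_imp not_less)
    qed
    then have "unstable_mean F U Q" unfolding unstable_mean_def
      by (intro exI[of _ e] conjI that)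
    then show False using nu by blast
  qed
  show "equi_inv_mean F U Q" unfolding equi_inv_mean_def equi_inv_mean_point_def
  proof (intro ballI conjI allI impI)
    fix z assume z: "z \<in> Q"
    then show "z \<in> Q" .
    fix \<epsilon> :: real assume ep: "\<epsilon> > 0"
    obtain x \<delta> \<omega> where x: "x \<in> Q" "\<delta> > 0" "\<omega> \<in> ctrls U" and
      hx: "\<forall>y\<in>ball x \<delta> \<inter> Q. \<forall>m::nat. m \<ge> 1 \<longrightarrow>
        (1 / real m) * (\<Sum>i<m. infdist (phi F i y \<omega>) Q) < \<epsilon> / 2"
      using H[OF half_gt_zero[OF ep]] by blast
    have "x \<in> closure (interior Q)" using assms(5) closure_subset x(1) by blast
    then obtain p where p: "p \<in> interior Q" "dist p x < \<delta>"
      using x(2) unfolding closure_approachable by blast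
    define W where "W = ball x \<delta> \<inter> interior Q"
    have oW: "open W" by (simp add: W_def open_Int)
    have pW: "p \<in> W" using p by (simp add: W_def dist_commute)
    have "p \<in> Q" using p(1) interior_subset by blast
    then have "p \<in> closure (pos_orbit F U z)" using Qp2 z by blast
    then have "W \<inter> closure (pos_orbit F U z) \<noteq> {}" using pW by blast
    then have "W \<inter> pos_orbit F U z \<noteq> {}" using open_Int_closure_eq_empty[OF oW] by blast
    then obtain m \<omega>1 where m: "\<omega>1 \<in> ctrls U" "phi F m z \<omega>1 \<in> W"
      unfolding pos_orbit_def by blast
    have mQ: "phi F m z \<omega>1 \<in> Q" using m(2) interior_subset unfolding W_def by blast
    have inQ: "phi F i z \<omega>1 \<in> Q" if "i \<le> m" for i
      by (rule intermediate_in_Q[OF F assms(4) z m(1) mQ that])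
    define V where "V = (\<Inter>i\<in>{..m}. (\<lambda>y. phi F i y \<omega>1) -` ball (phi F i z \<omega>1) (\<epsilon>/2))
       \<inter> (\<lambda>y. phi F m y \<omega>1) -` W"
    have oi: "open ((\<lambda>y. phi F i y \<omega>1) -` ball (phi F i z \<omega>1) (\<epsilon>/2))" for i
      by (rule continuous_imp_open_vimage[OF phi_cont[OF F m(1)] open_UNIV open_ball subset_UNIV])
    have o1: "open (\<Inter>i\<in>{..m}. (\<lambda>y. phi F i y \<omega>1) -` ball (phi F i z \<omega>1) (\<epsilon>/2))"
      by (rule open_INT[OF finite_atMost]) (use oi in blast)
    have o2: "open ((\<lambda>y. phi F m y \<omega>1) -` W)"
      by (rule continuous_imp_open_vimage[OF phi_cont[OF F m(1)] open_UNIV oW subset_UNIV])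
    have oV: "open V" unfolding V_def by (rule open_Int[OF o1 o2])
    have Vchar: "v \<in> V \<longleftrightarrow> (\<forall>i\<le>m. dist (phi F i z \<omega>1) (phi F i v \<omega>1) < \<epsilon>/2) \<and> phi F m v \<omega>1 \<in> W" for v
      unfolding V_def by (simp only: Int_iff INT_iff vimage_eq mem_ball atMost_iff Ball_def)
    have zV: "z \<in> V" using m(2) ep by (simp add: Vchar)
    obtain \<eta> where eta: "\<eta> > 0" "ball z \<eta> \<subseteq> V" by (rule openE[OF oV zV])
    define \<omega>2 where "\<omega>2 = concat_ctrl m \<omega>1 \<omega>"
    show "\<exists>\<delta>>0. \<exists>\<omega>\<in>ctrls U. \<forall>n::nat. \<forall>y \<in> ball z \<delta> \<inter> Q. n \<ge> 1 \<longrightarrow>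
        (1 / real n) * (\<Sum>i<n. infdist (phi F i y \<omega>) Q) < \<epsilon>"
    proof (intro exI[of _ \<eta>] conjI bexI[of _ \<omega>2] allI ballI impI)
      show "\<eta> > 0" by (rule eta(1))
      show "\<omega>2 \<in> ctrls U" unfolding \<omega>2_def by (rule concat_ctrls[OF m(1) x(3)])
      fix n :: nat and y assume y: "y \<in> ball z \<eta> \<inter> Q" and n: "n \<ge> 1"
      have yV: "y \<in> V" using y eta(2) by blast
      have t1: "infdist (phi F i y \<omega>2) Q < \<epsilon> / 2" if "i \<le> m" for i
      proof -
        have e: "phi F i y \<omega>2 = phi F i y \<omega>1" unfolding \<omega>2_def using that by (rule concat_phi1)
        have "dist (phi F i z \<omega>1) (phi F i y \<omega>1) < \<epsilon> / 2" using yV that unfolding Vchar by blast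
        moreover have "infdist (phi F i y \<omega>1) Q \<le> infdist (phi F i z \<omega>1) Q + dist (phi F i y \<omega>1) (phi F i z \<omega>1)"
          by (rule infdist_triangle)
        ultimately show ?thesis using inQ[OF that] e by (simp add: dist_commute)
      qed
      have y': "phi F m y \<omega>1 \<in> ball x \<delta> \<inter> Q" using yV interior_subset unfolding Vchar W_def by blast
      have t2: "phi F (m + j) y \<omega>2 = phi F j (phi F m y \<omega>1) \<omega>" for j
        unfolding \<omega>2_def by (rule concat_phi2)
      let ?f = "\<lambda>i. infdist (phi F i y \<omega>2) Q"
      have S: "(\<Sum>i<n. ?f i) < real n * (\<epsilon> / 2)"
      proof (cases "n \<le> m")
        case True
        have "(\<Sum>i<n. ?f i) < (\<Sum>i<n. \<epsilon> / 2)"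
          using n True t1 by (intro sum_strict_mono) (auto simp: lessThan_empty_iff)
        then show ?thesis by simp
      next
        case False
        define k where "k = n - m"
        have k: "n = m + k" "k \<ge> 1" using False unfolding k_def by auto
        have s1: "(\<Sum>i<m. ?f i) \<le> real m * (\<epsilon> / 2)"
        proof -
          have "?f i \<le> \<epsilon>/2" if "i \<in> {..<m}" for i
            by (rule less_imp_le[OF t1]) (use that in simp)
          then have "(\<Sum>i<m. ?f i) \<le> of_nat (card {..<m}) * (\<epsilon> / 2)"
            by (rule sum_bounded_above)
          then show ?thesis by simp
        qed
        have "(1 / real k) * (\<Sum>j<k. infdist (phi F j (phi F m y \<omega>1) \<omega>) Q) < \<epsilon> / 2"
          using hx y' k(2) by blast
        then have s2': "(\<Sum>j<k. infdist (phi F j (phi F m y \<omega>1) \<omega>) Q) < real k * (\<epsilon> / 2)"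
          using k(2) by (simp add: field_simps)
        have "(\<Sum>j<k. ?f (m + j)) = (\<Sum>j<k. infdist (phi F j (phi F m y \<omega>1) \<omega>) Q)"
          by (simp only: t2)
        with s2' have s2: "(\<Sum>j<k. ?f (m + j)) < real k * (\<epsilon> / 2)" by simp
        have "(\<Sum>i<n. ?f i) = (\<Sum>i<m. ?f i) + (\<Sum>j<k. ?f (m + j))"
          unfolding k(1) by (rule sum_split_nat)
        moreover have "real n * (\<epsilon> / 2) = real m * (\<epsilon> / 2) + real k * (\<epsilon> / 2)"
          unfolding k(1) by (simp add: distrib_right)
        ultimately show ?thesis using s1 s2 by linarith
      qed
      have "real n * (\<epsilon> / 2) \<le> real n * \<epsilon>" using ep by simp
      then have "(\<Sum>i<n. ?f i) < real n * \<epsilon>" using S by linarith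
      then show "(1 / real n) * (\<Sum>i<n. infdist (phi F i y \<omega>2) Q) < \<epsilon>"
        using n by (simp add: field_simps)
    qed
  qed
qed

end
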